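(* Let $\mathfrak g$ be a finite-dimensional completely solvable Lie superalgebra over $\mathbf k$ with $N=\dim\mathfrak g$. Then (1) every minimal (graded) ideal of $\mathfrak g$ is one-dimensional; and (2) there exists a chain of graded ideals $\mathfrak g=\mathfrak g_0\supset\mathfrak g_1\supset\cdots\supset\mathfrak g_{N-1}\supset\mathfrak g_N=0$ of $\mathfrak g$ with $\dim\mathfrak g_i=N-i$ for all $i$.
   Context: $\mathbf k$ is algebraically closed of characteristic $p>2$. A Lie superalgebra $\mathfrak g$ is completely solvable if its derived sub-superalgebra $\mathfrak g^{(1)}=[\mathfrak g,\mathfrak g]$ is nilpotent. Ideals are $\mathbb Z_2$-graded. *)

theory Defs
  imports Main "HOL-Computational_Algebra.Polynomial"
begin

text \<open>Algebraically closed field: every nonconstant polynomial has a root.\<close>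
definition alg_closed_field :: "'k::field itself \<Rightarrow> bool" where
  "alg_closed_field _ \<longleftrightarrow> (\<forall>q::'k poly. degree q > 0 \<longrightarrow> (\<exists>x. poly q x = 0))"

text \<open>A Lie superalgebra structure on the whole type 'v, which is a vector space over 'k
  via scale, with Z2-grading given by the subspaces G 0 (even) and G 1 (odd)
  and bracket br. Parities are encoded as the naturals 0 and 1.\<close>
definition lie_superalgebra ::
  "('k::field \<Rightarrow> 'v::ab_group_add \<Rightarrow> 'v) \<Rightarrow> (nat \<Rightarrow> 'v set) \<Rightarrow> ('v \<Rightarrow> 'v \<Rightarrow> 'v) \<Rightarrow> bool" where
  "lie_superalgebra scale G br \<longleftrightarrow>
     vector_space scale \<and>
     module.subspace scale (G 0) \<and> module.subspace scale (G 1) \<and>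
     G 0 \<inter> G 1 = {0} \<and> (\<forall>v. \<exists>v0\<in>G 0. \<exists>v1\<in>G 1. v = v0 + v1) \<and>
     (\<forall>x y z. br (x + y) z = br x z + br y z) \<and>
     (\<forall>x y z. br x (y + z) = br x y + br x z) \<and>
     (\<forall>c x y. br (scale c x) y = scale c (br x y)) \<and>
     (\<forall>c x y. br x (scale c y) = scale c (br x y)) \<and>
     (\<forall>a b x y. a < 2 \<longrightarrow> b < 2 \<longrightarrow> x \<in> G a \<longrightarrow> y \<in> G b \<longrightarrow> br x y \<in> G ((a + b) mod 2)) \<and>
     (\<forall>a b x y. a < 2 \<longrightarrow> b < 2 \<longrightarrow> x \<in> G a \<longrightarrow> y \<in> G b \<longrightarrow>
        br x y = - scale ((-1) ^ (a * b)) (br y x)) \<and>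
     (\<forall>a b c x y z. a < 2 \<longrightarrow> b < 2 \<longrightarrow> c < 2 \<longrightarrow> x \<in> G a \<longrightarrow> y \<in> G b \<longrightarrow> z \<in> G c \<longrightarrow>
        scale ((-1) ^ (a * c)) (br x (br y z)) + scale ((-1) ^ (b * a)) (br y (br z x))
          + scale ((-1) ^ (c * b)) (br z (br x y)) = 0) \<and>
     (\<forall>y \<in> G 1. br y (br y y) = 0)"

definition fin_dim :: "('k::field \<Rightarrow> 'v::ab_group_add \<Rightarrow> 'v) \<Rightarrow> bool" where
  "fin_dim scale \<longleftrightarrow> (\<exists>B. finite B \<and> module.span scale B = UNIV)"

text \<open>Graded (Z2-homogeneous) ideal.\<close>
definition graded_ideal ::
  "('k::field \<Rightarrow> 'v::ab_group_add \<Rightarrow> 'v) \<Rightarrow> (nat \<Rightarrow> 'v set) \<Rightarrow> ('v \<Rightarrow> 'v \<Rightarrow> 'v) \<Rightarrow> 'v set \<Rightarrow> bool" where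
  "graded_ideal scale G br I \<longleftrightarrow>
     module.subspace scale I \<and>
     (\<forall>v\<in>I. \<forall>v0\<in>G 0. \<forall>v1\<in>G 1. v = v0 + v1 \<longrightarrow> v0 \<in> I \<and> v1 \<in> I) \<and>
     (\<forall>x y. y \<in> I \<longrightarrow> br x y \<in> I \<and> br y x \<in> I)"

definition minimal_graded_ideal ::
  "('k::field \<Rightarrow> 'v::ab_group_add \<Rightarrow> 'v) \<Rightarrow> (nat \<Rightarrow> 'v set) \<Rightarrow> ('v \<Rightarrow> 'v \<Rightarrow> 'v) \<Rightarrow> 'v set \<Rightarrow> bool" where
  "minimal_graded_ideal scale G br I \<longleftrightarrow>
     graded_ideal scale G br I \<and> I \<noteq> {0} \<and>
     (\<forall>J. graded_ideal scale G br J \<longrightarrow> J \<subseteq> I \<longrightarrow> J = {0} \<or> J = I)"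

text \<open>Derived sub-superalgebra [g,g].\<close>
definition derived ::
  "('k::field \<Rightarrow> 'v::ab_group_add \<Rightarrow> 'v) \<Rightarrow> ('v \<Rightarrow> 'v \<Rightarrow> 'v) \<Rightarrow> 'v set" where
  "derived scale br = module.span scale {br x y | x y. True}"

text \<open>Lower central series of a sub-superalgebra S: C^0 = S, C^(n+1) = span [S, C^n].\<close>
fun lcs :: "('k::field \<Rightarrow> 'v::ab_group_add \<Rightarrow> 'v) \<Rightarrow> ('v \<Rightarrow> 'v \<Rightarrow> 'v) \<Rightarrow> 'v set \<Rightarrow> nat \<Rightarrow> 'v set" where
  "lcs scale br S 0 = S"
| "lcs scale br S (Suc n) = module.span scale {br x y | x y. x \<in> S \<and> y \<in> lcs scale br S n}"

definition nilpotent_sub ::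
  "('k::field \<Rightarrow> 'v::ab_group_add \<Rightarrow> 'v) \<Rightarrow> ('v \<Rightarrow> 'v \<Rightarrow> 'v) \<Rightarrow> 'v set \<Rightarrow> bool" where
  "nilpotent_sub scale br S \<longleftrightarrow> (\<exists>n. lcs scale br S n = {0})"

definition completely_solvable ::
  "('k::field \<Rightarrow> 'v::ab_group_add \<Rightarrow> 'v) \<Rightarrow> ('v \<Rightarrow> 'v \<Rightarrow> 'v) \<Rightarrow> bool" where
  "completely_solvable scale br \<longleftrightarrow> nilpotent_sub scale br (derived scale br)"

end

theory Submission imports Defs begin

locale lsa = finite_dimensional_vector_space scale Basis
  for scale :: "'k::field \<Rightarrow> 'v::ab_group_add \<Rightarrow> 'v" (infixr \<open>*s\<close> 75) and Basis +
  fixes G :: "nat \<Rightarrow> 'v set" and br :: "'v \<Rightarrow> 'v \<Rightarrow> 'v"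
  assumes LS: "lie_superalgebra scale G br"
    and two: "(2::'k) \<noteq> 0"
    and AC: "alg_closed_field TYPE('k)"
    and CS: "completely_solvable scale br"
begin

lemma LSc: "vector_space scale \<and>
     subspace (G 0) \<and> subspace (G 1) \<and>
     G 0 \<inter> G 1 = {0} \<and> (\<forall>v. \<exists>v0\<in>G 0. \<exists>v1\<in>G 1. v = v0 + v1) \<and>
     (\<forall>x y z. br (x + y) z = br x z + br y z) \<and>
     (\<forall>x y z. br x (y + z) = br x y + br x z) \<and>
     (\<forall>c x y. br (scale c x) y = scale c (br x y)) \<and>
     (\<forall>c x y. br x (scale c y) = scale c (br x y)) \<and>
     (\<forall>a b x y. a < 2 \<longrightarrow> b < 2 \<longrightarrow> x \<in> G a \<longrightarrow> y \<in> G b \<longrightarrow> br x y \<in> G ((a + b) mod 2)) \<and>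
     (\<forall>a b x y. a < 2 \<longrightarrow> b < 2 \<longrightarrow> x \<in> G a \<longrightarrow> y \<in> G b \<longrightarrow>
        br x y = - scale ((-1) ^ (a * b)) (br y x)) \<and>
     (\<forall>a b c x y z. a < 2 \<longrightarrow> b < 2 \<longrightarrow> c < 2 \<longrightarrow> x \<in> G a \<longrightarrow> y \<in> G b \<longrightarrow> z \<in> G c \<longrightarrow>
        scale ((-1) ^ (a * c)) (br x (br y z)) + scale ((-1) ^ (b * a)) (br y (br z x))
          + scale ((-1) ^ (c * b)) (br z (br x y)) = 0) \<and>
     (\<forall>y \<in> G 1. br y (br y y) = 0)"
  using LS unfolding lie_superalgebra_def .

lemma G0sub: "subspace (G 0)" using LSc by (elim conjE)
lemma G1sub: "subspace (G 1)" using LSc by (elim conjE)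
lemma Gint: "G 0 \<inter> G 1 = {0}" using LSc by (elim conjE)
lemma decomp: "\<exists>v0\<in>G 0. \<exists>v1\<in>G 1. v = v0 + v1" using LSc by (elim conjE) blast
lemma br_add_l: "br (x + y) z = br x z + br y z" using LSc by (elim conjE) blast
lemma br_add_r: "br x (y + z) = br x y + br x z" using LSc by (elim conjE) blast
lemma br_scale_l: "br (c *s x) y = c *s (br x y)" using LSc by (elim conjE) blast
lemma br_scale_r: "br x (c *s y) = c *s (br x y)" using LSc by (elim conjE) blast

lemma br_grade: "a < 2 \<Longrightarrow> b < 2 \<Longrightarrow> x \<in> G a \<Longrightarrow> y \<in> G b \<Longrightarrow> br x y \<in> G ((a + b) mod 2)"
proof -
  have "\<forall>a b x y. a < 2 \<longrightarrow> b < 2 \<longrightarrow> x \<in> G a \<longrightarrow> y \<in> G b \<longrightarrow> br x y \<in> G ((a + b) mod 2)"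
    using LSc by (elim conjE)
  then show "a < 2 \<Longrightarrow> b < 2 \<Longrightarrow> x \<in> G a \<Longrightarrow> y \<in> G b \<Longrightarrow> br x y \<in> G ((a + b) mod 2)" by blast
qed

lemma br_anti: "a < 2 \<Longrightarrow> b < 2 \<Longrightarrow> x \<in> G a \<Longrightarrow> y \<in> G b \<Longrightarrow>
        br x y = - scale ((-1) ^ (a * b)) (br y x)"
proof -
  have "\<forall>a b x y. a < 2 \<longrightarrow> b < 2 \<longrightarrow> x \<in> G a \<longrightarrow> y \<in> G b \<longrightarrow>
        br x y = - scale ((-1) ^ (a * b)) (br y x)"
    using LSc by (elim conjE)
  then show "a < 2 \<Longrightarrow> b < 2 \<Longrightarrow> x \<in> G a \<Longrightarrow> y \<in> G b \<Longrightarrow>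
        br x y = - scale ((-1) ^ (a * b)) (br y x)" by blast
qed

lemma jacobi: "a < 2 \<Longrightarrow> b < 2 \<Longrightarrow> c < 2 \<Longrightarrow> x \<in> G a \<Longrightarrow> y \<in> G b \<Longrightarrow> z \<in> G c \<Longrightarrow>
        scale ((-1) ^ (a * c)) (br x (br y z)) + scale ((-1) ^ (b * a)) (br y (br z x))
          + scale ((-1) ^ (c * b)) (br z (br x y)) = 0"
proof -
  have "\<forall>a b c x y z. a < 2 \<longrightarrow> b < 2 \<longrightarrow> c < 2 \<longrightarrow> x \<in> G a \<longrightarrow> y \<in> G b \<longrightarrow> z \<in> G c \<longrightarrow>
        scale ((-1) ^ (a * c)) (br x (br y z)) + scale ((-1) ^ (b * a)) (br y (br z x))
          + scale ((-1) ^ (c * b)) (br z (br x y)) = 0"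
    using LSc by (elim conjE)
  then show "a < 2 \<Longrightarrow> b < 2 \<Longrightarrow> c < 2 \<Longrightarrow> x \<in> G a \<Longrightarrow> y \<in> G b \<Longrightarrow> z \<in> G c \<Longrightarrow>
        scale ((-1) ^ (a * c)) (br x (br y z)) + scale ((-1) ^ (b * a)) (br y (br z x))
          + scale ((-1) ^ (c * b)) (br z (br x y)) = 0" by blast
qed

lemma br_zero_l[simp]: "br 0 y = 0"
  using br_add_l[of 0 0 y] by simp
lemma br_zero_r[simp]: "br x 0 = 0"
  using br_add_r[of x 0 0] by simp
lemma br_neg_l: "br (- x) y = - br x y"
  using br_add_l[of x "-x" y] by (intro minus_unique[symmetric]) simp
lemma br_neg_r: "br x (- y) = - br x y"
  using br_add_r[of x y "-y"] by (intro minus_unique[symmetric]) simp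
lemma br_diff_l: "br (x - y) z = br x z - br y z"
  using br_add_l[of x "-y" z] by (simp add: br_neg_l)
lemma br_diff_r: "br x (y - z) = br x y - br x z"
  using br_add_r[of x y "-z"] by (simp add: br_neg_r)

lemma uniq: "v0 + v1 = w0 + w1 \<Longrightarrow> v0 \<in> G 0 \<Longrightarrow> w0 \<in> G 0 \<Longrightarrow> v1 \<in> G 1 \<Longrightarrow> w1 \<in> G 1
   \<Longrightarrow> v0 = w0 \<and> v1 = w1"
proof -
  assume h: "v0 + v1 = w0 + w1" "v0 \<in> G 0" "w0 \<in> G 0" "v1 \<in> G 1" "w1 \<in> G 1"
  have "v0 - w0 = w1 - v1" using h(1) by (simp add: algebra_simps)
  moreover have "v0 - w0 \<in> G 0" using h G0sub subspace_diff by blast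
  moreover have "w1 - v1 \<in> G 1" using h G1sub subspace_diff by blast
  ultimately have "v0 - w0 \<in> G 0 \<inter> G 1" by (metis IntI)
  then have "v0 - w0 = 0" using Gint by blast
  then show ?thesis using h(1) by auto
qed

lemma lin3: assumes "s *s X + t *s Y + u *s Z = 0" "s \<noteq> 0"
  shows "X = (- t / s) *s Y + (- u / s) *s Z"
proof -
  have "s *s X = - (t *s Y + u *s Z)" using assms(1)
    by (metis add.assoc eq_neg_iff_add_eq_0)
  also have "\<dots> = (- t) *s Y + (- u) *s Z" by simp
  finally have e: "s *s X = (- t) *s Y + (- u) *s Z" .
  have "X = (1/s) *s (s *s X)" using assms(2) by simp
  also have "\<dots> = (- t / s) *s Y + (- u / s) *s Z" unfolding e
    by (simp only: scale_right_distrib scale_scale) (simp add: field_simps)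
  finally show ?thesis .
qed

lemma deriv_hom: assumes "a < 2" "c < 2" "e < 2" "b \<in> G a" "x \<in> G c" "v \<in> G e"
  shows "br b (br x v) = br (br b x) v + ((-1) ^ (a * c)) *s br x (br b v)"
proof -
  have J: "scale ((-1) ^ (a * e)) (br b (br x v)) + scale ((-1) ^ (c * a)) (br x (br v b))
          + scale ((-1) ^ (e * c)) (br v (br b x)) = 0"
    using jacobi[OF assms(1,2,3) assms(4,5,6)] .
  have A1: "br v b = (- ((-1) ^ (e * a))) *s br b v" using br_anti[OF assms(3,1,6,4)] by simp
  have bx: "br b x \<in> G ((a + c) mod 2)" using br_grade[OF assms(1,2,4,5)] .
  have A2: "br v (br b x) = (- ((-1) ^ (e * ((a + c) mod 2)))) *s br (br b x) v"
    using br_anti[OF assms(3) _ assms(6) bx] by simp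
  define s1 :: 'k where "s1 = (-1) ^ (a * e)"
  define s2 :: 'k where "s2 = (-1) ^ (c * a) * (- ((-1) ^ (e * a)))"
  define s3 :: 'k where "s3 = (-1) ^ (e * c) * (- ((-1) ^ (e * ((a + c) mod 2))))"
  have B1: "br x (br v b) = (- ((-1) ^ (e * a))) *s br x (br b v)" unfolding A1 by (rule br_scale_r)
  have J2: "s1 *s br b (br x v) + s2 *s br x (br b v) + s3 *s br (br b x) v = 0"
    using J unfolding B1 A2 scale_scale s1_def s2_def s3_def .
  have ne: "s1 \<noteq> 0" unfolding s1_def by simp
  have "a = 0 \<or> a = 1" "c = 0 \<or> c = 1" "e = 0 \<or> e = 1" using assms by auto
  then have c1: "- s2 / s1 = (-1) ^ (a * c)" and c2: "- s3 / s1 = 1"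
    unfolding s1_def s2_def s3_def by (elim disjE; simp)+
  show ?thesis using lin3[OF J2 ne] unfolding c1 c2 by (simp add: add.commute)
qed


lemma deriv: assumes "a < 2" "c < 2" "b \<in> G a" "x \<in> G c"
  shows "br b (br x v) = br (br b x) v + ((-1) ^ (a * c)) *s br x (br b v)"
proof -
  obtain v0 v1 where v: "v0 \<in> G 0" "v1 \<in> G 1" "v = v0 + v1" using decomp by blast
  have e0: "br b (br x v0) = br (br b x) v0 + ((-1) ^ (a * c)) *s br x (br b v0)"
    using deriv_hom[OF assms(1,2) _ assms(3,4) v(1)] by simp
  have e1: "br b (br x v1) = br (br b x) v1 + ((-1) ^ (a * c)) *s br x (br b v1)"
    using deriv_hom[OF assms(1,2) _ assms(3,4) v(2)] by simp
  show ?thesis unfolding v(3) br_add_r br_add_l e0 e1 scale_right_distrib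
    by (simp add: ac_simps)
qed

lemma odd_sq: assumes "b \<in> G 1" shows "br b (br b v) = (1/2) *s br (br b b) v"
proof -
  have h: "br b (br b v) = br (br b b) v + (-1) *s br b (br b v)" using deriv[of 1 1 b b v] assms by simp
  have "(1+1) *s br b (br b v) = br b (br b v) + br b (br b v)" by (simp only: scale_left_distrib scale_one)
  also have "\<dots> = br (br b b) v"
  proof -
    have h': "br b (br b v) = br (br b b) v - br b (br b v)" using h by simp
    show ?thesis by (subst (1) h') simp
  qed
  finally have "2 *s br b (br b v) = br (br b b) v" by simp
  then have "(1/2) *s (2 *s br b (br b v)) = (1/2) *s br (br b b) v" by simp
  then show ?thesis using two by simp
qed

definition hom :: "'v \<Rightarrow> bool" where "hom x \<longleftrightarrow> (\<exists>a<2. x \<in> G a)"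
definition graded :: "'v set \<Rightarrow> bool" where
  "graded S \<longleftrightarrow> (\<forall>v\<in>S. \<forall>v0\<in>G 0. \<forall>v1\<in>G 1. v = v0 + v1 \<longrightarrow> v0 \<in> S \<and> v1 \<in> S)"
abbreviation gi :: "'v set \<Rightarrow> bool" where "gi I \<equiv> graded_ideal scale G br I"
abbreviation D :: "'v set" where "D \<equiv> derived scale br"

lemma gi_iff: "gi I \<longleftrightarrow> subspace I \<and> graded I \<and> (\<forall>x y. y \<in> I \<longrightarrow> br x y \<in> I \<and> br y x \<in> I)"
  unfolding graded_ideal_def graded_def by blast

lemma gi_D: assumes "gi I"
  shows "subspace I" "graded I" "\<And>x y. y \<in> I \<Longrightarrow> br x y \<in> I \<and> br y x \<in> I"
proof -
  have "subspace I \<and> graded I \<and> (\<forall>x y. y \<in> I \<longrightarrow> br x y \<in> I \<and> br y x \<in> I)"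
    using assms unfolding gi_iff .
  then show "subspace I" "graded I" "\<And>x y. y \<in> I \<Longrightarrow> br x y \<in> I \<and> br y x \<in> I" by blast+
qed

lemma split_J: assumes "graded J" "p + q \<in> J" "a < 2" "p \<in> G a" "q \<in> G ((a + 1) mod 2)"
  shows "p \<in> J \<and> q \<in> J"
proof -
  have "a = 0 \<or> a = 1" using assms by auto
  then show ?thesis
  proof
    assume a0: "a = 0"
    then have "q \<in> G 1" "p \<in> G 0" using assms(4,5) by simp_all
    then show ?thesis using assms(1,2) unfolding graded_def by blast
  next
    assume "a = 1" then have "q \<in> G 0" "p \<in> G 1" using assms by auto
    moreover have "q + p \<in> J" using assms by (simp add: add.commute)
    ultimately show ?thesis using assms(1) unfolding graded_def by blast
  qed
qed

lemma D_br: "br x y \<in> D" unfolding derived_def by (rule span_base) blast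

lemma hom_br: assumes "hom x" "hom y" shows "hom (br x y)"
proof -
  obtain a b where "a < 2" "x \<in> G a" "b < 2" "y \<in> G b" using assms unfolding hom_def by blast
  then have "br x y \<in> G ((a + b) mod 2)" using br_grade by blast
  moreover have "(a + b) mod 2 < (2::nat)" by simp
  ultimately show ?thesis unfolding hom_def by blast
qed

primrec Pset :: "'v set \<Rightarrow> nat \<Rightarrow> 'v set" where
  "Pset K 0 = K"
| "Pset K (Suc j) = {br d p | d p. d \<in> D \<and> hom d \<and> p \<in> Pset K j}"

lemma Pset_lcs: "Pset K (Suc j) \<subseteq> lcs scale br D j"
proof (induction j)
  case 0 then show ?case using D_br by auto
next
  case (Suc j)
  show ?case
  proof
    fix z assume "z \<in> Pset K (Suc (Suc j))"
    then obtain d p where "z = br d p" "d \<in> D" "p \<in> Pset K (Suc j)" by auto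
    then have "z \<in> {br x y | x y. x \<in> D \<and> y \<in> lcs scale br D j}" using Suc by blast
    then show "z \<in> lcs scale br D (Suc j)" by (simp add: span_base)
  qed
qed

lemma Pset_K: assumes "gi K" shows "Pset K j \<subseteq> K"
  by (induction j) (use gi_D(3)[OF assms] in auto)

definition W :: "'v set \<Rightarrow> 'v set \<Rightarrow> 'v set" where
  "W J K = {v \<in> K. \<forall>d\<in>D. hom d \<longrightarrow> br d v \<in> J}"

lemma W_big: assumes "gi J" "gi K" "J \<subset> K" shows "\<not> W J K \<subseteq> J"
proof
  assume WJ: "W J K \<subseteq> J"
  obtain n where n: "lcs scale br D n = {0}" using CS unfolding completely_solvable_def nilpotent_sub_def by blast
  have J0: "0 \<in> J" using gi_D(1)[OF assms(1)] subspace_0 by blast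
  have "Pset K (Suc n - k) \<subseteq> J" for k
  proof (induction k)
    case 0
    have P0: "Pset K (Suc n) \<subseteq> {0}" using Pset_lcs[of K n] n by (simp only:)
    show ?case by (metis diff_zero empty_subsetI insert_subset J0 order_trans P0)
  next
    case (Suc k)
    show ?case
    proof (cases "Suc n - k = 0")
      case True then show ?thesis using Suc by simp
    next
      case False
      then obtain m where m: "Suc n - k = Suc m" "Suc n - Suc k = m" by (cases "Suc n - k") auto
      show ?thesis unfolding m(2)
      proof
        fix p assume p: "p \<in> Pset K m"
        have "p \<in> K" using p Pset_K[OF assms(2)] by blast
        moreover have "\<forall>d\<in>D. hom d \<longrightarrow> br d p \<in> J"
          using p Suc.IH unfolding m(1) by auto
        ultimately show "p \<in> J" using WJ unfolding W_def by blast
      qed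
    qed
  qed
  from this[of "Suc n"] have "K \<subseteq> J" by simp
  then show False using assms(3) by blast
qed

lemma W_props: assumes "gi J" "gi K" "J \<subseteq> K"
  shows "subspace (W J K)" "J \<subseteq> W J K" "W J K \<subseteq> K" "graded (W J K)"
    "\<And>x v. hom x \<Longrightarrow> v \<in> W J K \<Longrightarrow> br x v \<in> W J K"
proof -
  have J: "subspace J" "graded J" "\<And>x y. y \<in> J \<Longrightarrow> br x y \<in> J \<and> br y x \<in> J"
    using gi_D[OF assms(1)] by blast+
  have K: "subspace K" "graded K" "\<And>x y. y \<in> K \<Longrightarrow> br x y \<in> K \<and> br y x \<in> K"
    using gi_D[OF assms(2)] by blast+
  show "subspace (W J K)"
  proof (rule subspaceI)
    show "0 \<in> W J K" unfolding W_def using J(1) K(1) subspace_0 by auto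
  next
    fix x y assume x: "x \<in> W J K" and y: "y \<in> W J K"
    have "x + y \<in> K" using x y K(1) subspace_add unfolding W_def by blast
    moreover have "\<forall>d\<in>D. hom d \<longrightarrow> br d (x + y) \<in> J"
      using x y J(1) subspace_add unfolding W_def br_add_r by blast
    ultimately show "x + y \<in> W J K" unfolding W_def by blast
  next
    fix c x assume x: "x \<in> W J K"
    have "c *s x \<in> K" using x K(1) subspace_scale unfolding W_def by blast
    moreover have "\<forall>d\<in>D. hom d \<longrightarrow> br d (c *s x) \<in> J"
      using x J(1) subspace_scale unfolding W_def br_scale_r by blast
    ultimately show "c *s x \<in> W J K" unfolding W_def by blast
  qed
  show "J \<subseteq> W J K" unfolding W_def using assms(3) J(3) by blast
  show "W J K \<subseteq> K" unfolding W_def by blast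
  show "graded (W J K)" unfolding graded_def
  proof (intro ballI impI)
    fix v v0 v1 assume v: "v \<in> W J K" "v0 \<in> G 0" "v1 \<in> G 1" "v = v0 + v1"
    have vK: "v \<in> K" using v(1) unfolding W_def by blast
    have k: "v0 \<in> K" "v1 \<in> K" using K(2) vK v(2,3,4) unfolding graded_def by blast+
    have "br d v0 \<in> J \<and> br d v1 \<in> J" if d: "d \<in> D" "hom d" for d
    proof -
      obtain a where a: "a < 2" "d \<in> G a" using d hom_def by blast
      have h0: "br d v0 \<in> G a" using br_grade[OF a(1) _ a(2) v(2)] a(1) by simp
      have h1: "br d v1 \<in> G ((a + 1) mod 2)" using br_grade[OF a(1) _ a(2) v(3)] by simp
      have "br d v \<in> J" using v(1) d unfolding W_def by blast
      then have sm: "br d v0 + br d v1 \<in> J" unfolding v(4) br_add_r .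
      show ?thesis by (rule split_J[OF J(2) sm a(1) h0 h1])
    qed
    then show "v0 \<in> W J K \<and> v1 \<in> W J K" using k unfolding W_def by blast
  qed
  show "br x v \<in> W J K" if x: "hom x" and v: "v \<in> W J K" for x v
  proof -
    have "br x v \<in> K" using v K(3) unfolding W_def by blast
    moreover have "br d (br x v) \<in> J" if d: "d \<in> D" "hom d" for d
    proof -
      obtain a where a: "a < 2" "d \<in> G a" using d hom_def by blast
      obtain c where c: "c < 2" "x \<in> G c" using x hom_def by blast
      have "br (br d x) v \<in> J" using v D_br hom_br[OF d(2) x] unfolding W_def by blast
      moreover have "br x (br d v) \<in> J" using v d J(3) unfolding W_def by blast
      ultimately show ?thesis unfolding deriv[OF a(1) c(1) a(2) c(2)]
        using J(1) by (simp add: subspace_add subspace_scale)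
    qed
    ultimately show ?thesis unfolding W_def by blast
  qed
qed


definition opp :: "('v \<Rightarrow> 'v) \<Rightarrow> 'k poly \<Rightarrow> 'v \<Rightarrow> 'v" where
  "opp T p v = (\<Sum>i\<le>degree p. coeff p i *s (T ^^ i) v)"

lemma opp_ext: "degree p < n \<Longrightarrow> opp T p v = (\<Sum>i<n. coeff p i *s (T ^^ i) v)"
  unfolding opp_def
  by (rule sum.mono_neutral_left) (auto simp: coeff_eq_0)

lemma T_sum: fixes T :: "'v \<Rightarrow> 'v" assumes "\<And>x y. T (x + y) = T x + T y" shows "T (sum f A) = (\<Sum>a\<in>A. T (f a))"
proof -
  have "T 0 + T 0 = T 0 + 0" using assms[of 0 0] by simp
  then have T0: "T 0 = 0" by (metis add_left_cancel)
  show ?thesis by (induction A rule: infinite_finite_induct) (auto simp: T0 assms)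
qed

lemma opp_X: assumes "\<And>x y. T (x + y) = T x + T y" "\<And>c x. T (c *s x) = c *s T x"
  shows "opp T (pCons 0 q) v = T (opp T q v)"
proof -
  have "degree (pCons 0 q) < Suc (Suc (degree q))" using degree_pCons_le[of 0 q] by simp
  then have "opp T (pCons 0 q) v = (\<Sum>i<Suc (Suc (degree q)). coeff (pCons 0 q) i *s (T ^^ i) v)"
    by (rule opp_ext)
  also have "\<dots> = (\<Sum>i<Suc (degree q). coeff q i *s (T ^^ Suc i) v)"
    by (subst sum.lessThan_Suc_shift) simp
  also have "\<dots> = (\<Sum>i<Suc (degree q). T (coeff q i *s (T ^^ i) v))"
    by (simp add: assms(2))
  also have "\<dots> = T (\<Sum>i<Suc (degree q). coeff q i *s (T ^^ i) v)"
    by (rule T_sum[symmetric]) (rule assms(1))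
  also have "\<dots> = T (opp T q v)" using opp_ext[of q "Suc (degree q)" T v] by simp
  finally show ?thesis .
qed

lemma opp_add: "opp T (p + q) v = opp T p v + opp T q v"
proof -
  define n where "n = Suc (max (degree p) (degree q))"
  have "degree (p + q) < n" using degree_add_le[of p "max (degree p) (degree q)" q] n_def by simp
  moreover have "degree p < n" "degree q < n" using n_def by auto
  ultimately show ?thesis
    by (simp add: opp_ext coeff_add scale_left_distrib sum.distrib)
qed

lemma opp_smult: "opp T (smult c p) v = c *s opp T p v"
proof -
  have h: "degree (smult c p) < Suc (degree p)" using degree_smult_le[of c p] by simp
  show ?thesis unfolding opp_ext[OF h] opp_ext[OF lessI[of "degree p"]]
    by (simp only: coeff_smult scale_scale[symmetric] scale_sum_right)
qed

lemma opp_lin: assumes "\<And>x y. T (x + y) = T x + T y" "\<And>c x. T (c *s x) = c *s T x"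
  shows "opp T ([:-a, 1:] * q) v = T (opp T q v) - a *s opp T q v"
proof -
  have eq: "[:-a, 1:] * q = smult (-a) q + pCons 0 q" by simp
  show ?thesis unfolding eq opp_add opp_smult opp_X[OF assms]
    by (simp add: scale_minus_left)
qed

lemma opp_in: assumes "subspace S" "v \<in> S" "\<And>x. x \<in> S \<Longrightarrow> T x \<in> S"
  shows "opp T p v \<in> S"
proof -
  have "(T ^^ i) v \<in> S" for i by (induction i) (auto simp: assms)
  then show ?thesis unfolding opp_def using assms(1) by (intro subspace_sum subspace_scale) auto
qed

lemma eig_rec: assumes "subspace S" "subspace J" "u \<in> S" "u \<notin> J"
    "\<And>x y. T (x + y) = T x + T y" "\<And>c x. T (c *s x) = c *s T x" "\<And>x. x \<in> S \<Longrightarrow> T x \<in> S"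
  shows "p \<noteq> 0 \<Longrightarrow> opp T p u \<in> J \<Longrightarrow> \<exists>l v. v \<in> S \<and> v \<notin> J \<and> T v - l *s v \<in> J"
proof (induction "degree p" arbitrary: p rule: less_induct)
  case less
  show ?case
  proof (cases "degree p = 0")
    case True
    define c where "c = coeff p 0"
    have p: "p = [:c:]" using degree_0_id[OF True] c_def by simp
    then have c: "c \<noteq> 0" using less.prems by auto
    have "opp T p u = c *s u" unfolding p opp_def by simp
    then have "c *s u \<in> J" using less.prems by simp
    then have "(1/c) *s (c *s u) \<in> J" using assms(2) subspace_scale by blast
    then have "u \<in> J" using c by simp
    then show ?thesis using assms(4) by blast
  next
    case False
    then obtain a where "poly p a = 0" using AC unfolding alg_closed_field_def by blast
    then have "[:-a, 1:] dvd p" using poly_eq_0_iff_dvd by blast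
    then obtain q where q: "p = [:-a, 1:] * q" by (elim dvdE)
    have q0: "q \<noteq> 0" using q less.prems by auto
    have dq: "degree q < degree p" unfolding q using degree_mult_eq[of "[:-a, 1:]" q] q0 by simp
    show ?thesis
    proof (cases "opp T q u \<in> J")
      case True
      then show ?thesis using less.hyps[OF dq q0] by blast
    next
      case False
      have "opp T q u \<in> S" using opp_in[of S u T q, OF assms(1,3)] assms(7) by blast
      moreover have "T (opp T q u) - a *s opp T q u \<in> J"
        using less.prems(2) unfolding q opp_lin[OF assms(5,6)] .
      ultimately show ?thesis using False by blast
    qed
  qed
qed

lemma ind_sum: fixes n :: nat and g :: "nat \<Rightarrow> 'v" shows "(\<Sum>k<n. (if j = k then (1::'k) else 0) *s g k) = (if j < n then g j else 0)"
proof -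
  have "(\<Sum>k<n. (if j = k then (1::'k) else 0) *s g k) = (\<Sum>k<n. if j = k then g k else 0)"
    by (rule sum.cong) auto
  moreover have "(\<Sum>k<n. if j = k then g k else 0) = (if j < n then g j else 0)"
    by (induction n) auto
  ultimately show ?thesis by simp
qed

lemma poly_rel: assumes "\<And>x y. T (x + y) = T x + T y" "\<And>c x. T (c *s x) = c *s T x"
  shows "\<exists>p. p \<noteq> 0 \<and> opp T p u = 0"
proof -
  define m where "m = card Basis"
  define f where "f i = (T ^^ i) u" for i
  show ?thesis
  proof (cases "inj_on f {..m}")
    case False
    then obtain i j where ij: "i \<le> m" "j \<le> m" "f i = f j" "i < j"
      unfolding inj_on_def by (metis atMost_iff linorder_neqE_nat)
    define p where "p = monom (1::'k) j - monom 1 i"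
    have cp: "coeff p k = (if j = k then 1 else 0) - (if i = k then 1 else 0)" for k
      unfolding p_def by simp
    have p0: "p \<noteq> 0" using cp[of j] ij(4) by auto
    have dp: "degree p < Suc j" using cp ij(4) by (intro le_imp_less_Suc degree_le) auto
    have "opp T p u = (\<Sum>k<Suc j. ((if j = k then 1 else 0) - (if i = k then 1 else 0)) *s f k)"
      unfolding opp_ext[OF dp] cp f_def ..
    also have "\<dots> = (\<Sum>k<Suc j. (if j = k then 1 else 0) *s f k) - (\<Sum>k<Suc j. (if i = k then 1 else 0) *s f k)"
      by (simp only: scale_left_diff_distrib sum_subtractf)
    also have "\<dots> = 0" unfolding ind_sum using ij by simp
    finally show ?thesis using p0 by blast
  next
    case True
    define X where "X = f ` {..m}"
    have fX: "finite X" unfolding X_def by simp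
    have cX: "card X = Suc m" unfolding X_def using card_image[OF True] by simp
    have "dependent X"
    proof (rule ccontr)
      assume "\<not> dependent X"
      then have "card X \<le> card Basis" using independent_span_bound[OF finite_Basis] span_Basis by auto
      then show False using cX m_def by simp
    qed
    then obtain w where w: "\<exists>v\<in>X. w v \<noteq> 0" "(\<Sum>v\<in>X. w v *s v) = 0" using dependent_finite[OF fX] by blast
    define p where "p = (\<Sum>i\<le>m. monom (w (f i)) i)"
    have cp: "coeff p k = (if k \<le> m then w (f k) else 0)" for k
      unfolding p_def coeff_sum coeff_monom by (simp add: sum.delta)
    have dp: "degree p < Suc m" using cp by (intro le_imp_less_Suc degree_le) auto
    obtain i where i: "i \<le> m" "w (f i) \<noteq> 0" using w(1) unfolding X_def by blast
    have p0: "p \<noteq> 0" using cp[of i] i by auto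
    have "opp T p u = (\<Sum>k<Suc m. w (f k) *s f k)"
      unfolding opp_ext[OF dp] cp f_def by (rule sum.cong) auto
    also have "\<dots> = (\<Sum>k\<in>{..m}. w (f k) *s f k)" by (simp add: lessThan_Suc_atMost)
    also have "\<dots> = (\<Sum>v\<in>X. w v *s v)" unfolding X_def by (simp add: sum.reindex[OF True])
    also have "\<dots> = 0" by (rule w(2))
    finally show ?thesis using p0 by blast
  qed
qed

lemma eigen: assumes "subspace S" "subspace J" "J \<subseteq> S" "\<not> S \<subseteq> J"
    "\<And>x y. T (x + y) = T x + T y" "\<And>c x. T (c *s x) = c *s T x" "\<And>x. x \<in> S \<Longrightarrow> T x \<in> S"
  shows "\<exists>l v. v \<in> S \<and> v \<notin> J \<and> T v - l *s v \<in> J"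
proof -
  obtain u where u: "u \<in> S" "u \<notin> J" using assms(4) by blast
  obtain p where p: "p \<noteq> 0" "opp T p u = 0" using poly_rel[OF assms(5,6)] by blast
  have "opp T p u \<in> J" using p(2) assms(2) subspace_0 by simp
  then show ?thesis using eig_rec[OF assms(1,2) u assms(5,6,7) p(1)] by blast
qed

definition Inv :: "'v set \<Rightarrow> 'v set \<Rightarrow> 'v set \<Rightarrow> bool" where
  "Inv J K S \<longleftrightarrow> subspace S \<and> J \<subseteq> S \<and> S \<subseteq> W J K \<and> \<not> S \<subseteq> J \<and> graded S \<and>
     (\<forall>x v. hom x \<longrightarrow> v \<in> S \<longrightarrow> br x v \<in> S)"

lemma sub_props: assumes "gi J" "gi K" "J \<subseteq> K" "Inv J K S" "a < 2" "b \<in> G a" "a = 0 \<or> l = 0"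
  defines "S' \<equiv> {v \<in> S. br b v - l *s v \<in> J}"
  shows "subspace S'" "J \<subseteq> S'" "S' \<subseteq> W J K" "graded S'" "\<And>x v. hom x \<Longrightarrow> v \<in> S' \<Longrightarrow> br x v \<in> S'"
proof -
  have J: "subspace J" "graded J" "\<And>x y. y \<in> J \<Longrightarrow> br x y \<in> J \<and> br y x \<in> J"
    using gi_D[OF assms(1)] by blast+
  have S: "subspace S" "J \<subseteq> S" "S \<subseteq> W J K" "graded S" "\<And>x v. hom x \<Longrightarrow> v \<in> S \<Longrightarrow> br x v \<in> S"
    using assms(4) unfolding Inv_def by blast+
  have lin: "br b (x + y) - l *s (x + y) = (br b x - l *s x) + (br b y - l *s y)" for x y
    by (simp add: br_add_r scale_right_distrib)
  have lins: "br b (c *s x) - l *s (c *s x) = c *s (br b x - l *s x)" for c x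
    by (simp add: br_scale_r scale_right_diff_distrib)
  show "subspace S'" unfolding S'_def
  proof (rule subspaceI)
    show "0 \<in> {v \<in> S. br b v - l *s v \<in> J}" using S(1) J(1) by (simp add: subspace_0)
  next
    fix x y assume x: "x \<in> {v \<in> S. br b v - l *s v \<in> J}" and y: "y \<in> {v \<in> S. br b v - l *s v \<in> J}"
    then show "x + y \<in> {v \<in> S. br b v - l *s v \<in> J}"
      unfolding mem_Collect_eq lin using S(1) J(1) subspace_add by blast
  next
    fix c x assume x: "x \<in> {v \<in> S. br b v - l *s v \<in> J}"
    then show "c *s x \<in> {v \<in> S. br b v - l *s v \<in> J}"
      unfolding mem_Collect_eq lins using S(1) J(1) subspace_scale by blast
  qed
  show "J \<subseteq> S'" unfolding S'_def using S(2) J(1,3) subspace_scale subspace_diff by blast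
  show "S' \<subseteq> W J K" unfolding S'_def using S(3) by blast
  show "graded S'" unfolding graded_def
  proof (intro ballI impI)
    fix v v0 v1 assume v: "v \<in> S'" "v0 \<in> G 0" "v1 \<in> G 1" "v = v0 + v1"
    have s: "v0 \<in> S" "v1 \<in> S" using v S(4) unfolding S'_def graded_def by blast+
    have sum: "(br b v0 - l *s v0) + (br b v1 - l *s v1) \<in> J" using v unfolding S'_def lin[symmetric] by blast
    have "br b v0 - l *s v0 \<in> J \<and> br b v1 - l *s v1 \<in> J"
      using assms(7)
    proof
      assume a0: "a = 0"
      have "br b v0 - l *s v0 \<in> G 0"
        using br_grade[OF assms(5) _ assms(6) v(2)] a0 G0sub v(2) by (simp add: subspace_diff subspace_scale)
      moreover have "br b v1 - l *s v1 \<in> G ((0 + 1) mod 2)"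
        using br_grade[OF assms(5) _ assms(6) v(3)] a0 G1sub v(3) by (simp add: subspace_diff subspace_scale)
      ultimately show ?thesis by (intro split_J[OF J(2) sum, of 0]) simp_all
    next
      assume l0: "l = 0"
      have h0: "br b v0 \<in> G a" using br_grade[OF assms(5) _ assms(6) v(2)] assms(5) by simp
      have h1: "br b v1 \<in> G ((a + 1) mod 2)" using br_grade[OF assms(5) _ assms(6) v(3)] by simp
      have sm: "br b v0 + br b v1 \<in> J" using sum l0 by simp
      show ?thesis using split_J[OF J(2) sm assms(5) h0 h1] l0 by simp
    qed
    then show "v0 \<in> S' \<and> v1 \<in> S'" using s unfolding S'_def by blast
  qed
  show "br x v \<in> S'" if x: "hom x" and v: "v \<in> S'" for x v
  proof -
    obtain c where c: "c < 2" "x \<in> G c" using x hom_def by blast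
    have vS: "v \<in> S" and vJ: "br b v - l *s v \<in> J" using v unfolding S'_def by blast+
    have w: "v \<in> W J K" using vS S(3) by blast
    have t1: "br (br b x) v \<in> J" using w D_br hom_br[OF _ x, of b] assms(5,6) hom_def unfolding W_def by blast
    have "br b (br x v) - l *s br x v \<in> J" using assms(7)
    proof
      assume a0: "a = 0"
      have "br b (br x v) - l *s br x v = br (br b x) v + br x (br b v - l *s v)"
        using deriv[OF assms(5) c(1) assms(6) c(2), of v] a0 by (simp add: br_diff_r br_scale_r)
      then show ?thesis using t1 J(3)[OF vJ] J(1) subspace_add by metis
    next
      assume l0: "l = 0"
      have "br b v \<in> J" using vJ l0 by simp
      then have "br x (br b v) \<in> J" using J(3) by blast
      then show ?thesis unfolding deriv[OF assms(5) c(1) assms(6) c(2), of v] using l0 t1 J(1)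
        by (simp add: subspace_add subspace_scale)
    qed
    then show ?thesis unfolding S'_def using S(5)[OF x vS] by blast
  qed
qed

lemma step: assumes "gi J" "gi K" "J \<subseteq> K" "Inv J K S" "hom b"
  shows "\<exists>S'. Inv J K S' \<and> S' \<subseteq> S \<and> (\<exists>l. \<forall>v\<in>S'. br b v - l *s v \<in> J)"
proof -
  obtain a where a: "a < 2" "b \<in> G a" using assms(5) hom_def by blast
  have J: "subspace J" "graded J" "\<And>x y. y \<in> J \<Longrightarrow> br x y \<in> J \<and> br y x \<in> J"
    using gi_D[OF assms(1)] by blast+
  have S: "subspace S" "J \<subseteq> S" "S \<subseteq> W J K" "\<not> S \<subseteq> J" "graded S" "\<And>x v. hom x \<Longrightarrow> v \<in> S \<Longrightarrow> br x v \<in> S"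
    using assms(4) unfolding Inv_def by blast+
  have "\<exists>l. (a = 0 \<or> l = 0) \<and> \<not> {v \<in> S. br b v - l *s v \<in> J} \<subseteq> J"
  proof (cases "a = 0")
    case True
    obtain l v where "v \<in> S" "v \<notin> J" "br b v - l *s v \<in> J"
      using eigen[OF S(1) J(1) S(2) S(4), of "br b"] br_add_r br_scale_r S(6) assms(5) by blast
    then show ?thesis using True by blast
  next
    case False
    then have a1: "a = 1" using a by auto
    show ?thesis
    proof (cases "\<forall>v\<in>S. br b v \<in> J")
      case True
      show ?thesis
      proof (intro exI[of _ 0] conjI)
        show "a = 0 \<or> (0::'k) = 0" by simp
        show "\<not> {v \<in> S. br b v - 0 *s v \<in> J} \<subseteq> J" using True S(4) by auto
      qed
    next
      case False
      then obtain v where v: "v \<in> S" "br b v \<notin> J" by blast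
      have w: "br b v \<in> S" using S(6) assms(5) v by blast
      have "br (br b b) v \<in> J" using v S(3) D_br hom_br[OF assms(5,5)] unfolding W_def by blast
      then have bb: "br b (br b v) \<in> J" unfolding odd_sq[OF a(2)[unfolded a1]] using J(1) subspace_scale by blast
      show ?thesis
      proof (intro exI[of _ 0] conjI)
        show "a = 0 \<or> (0::'k) = 0" by simp
        show "\<not> {v \<in> S. br b v - 0 *s v \<in> J} \<subseteq> J" using w v bb by auto
      qed
    qed
  qed
  then obtain l where l: "a = 0 \<or> l = 0" "\<not> {v \<in> S. br b v - l *s v \<in> J} \<subseteq> J" by blast
  note P = sub_props[OF assms(1-4) a l(1)]
  have "Inv J K {v \<in> S. br b v - l *s v \<in> J}" unfolding Inv_def using P l(2) by blast
  then show ?thesis by blast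
qed

lemma iter: assumes "finite H" "\<forall>h\<in>H. hom h" "gi J" "gi K" "J \<subset> K"
  shows "\<exists>S. Inv J K S \<and> (\<forall>b\<in>H. \<exists>l. \<forall>v\<in>S. br b v - l *s v \<in> J)"
  using assms(1,2)
proof (induction H)
  case empty
  have "Inv J K (W J K)" unfolding Inv_def using W_props[OF assms(3,4)] W_big[OF assms(3,4,5)] assms(5) by blast
  then show ?case by blast
next
  case (insert b H)
  then obtain S where S: "Inv J K S" "\<forall>b\<in>H. \<exists>l. \<forall>v\<in>S. br b v - l *s v \<in> J" by auto
  obtain S' where "Inv J K S'" "S' \<subseteq> S" "\<exists>l. \<forall>v\<in>S'. br b v - l *s v \<in> J"
    using step[OF assms(3,4) _ S(1)] assms(5) insert.prems by blast
  then show ?case using S(2) by blast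
qed


lemma core: assumes "gi J" "gi K" "J \<subset> K"
  shows "\<exists>L. gi L \<and> J \<subset> L \<and> L \<subseteq> K \<and> dim L = dim J + 1"
proof -
  have J: "subspace J" "graded J" "\<And>x y. y \<in> J \<Longrightarrow> br x y \<in> J \<and> br y x \<in> J"
    using gi_D[OF assms(1)] by blast+
  have K: "subspace K" "graded K" using gi_D[OF assms(2)] by blast+
  obtain f0 f1 where f: "\<And>v. f0 v \<in> G 0" "\<And>v. f1 v \<in> G 1" "\<And>v. v = f0 v + f1 v"
    using decomp by metis
  define H where "H = f0 ` Basis \<union> f1 ` Basis"
  have Hf: "finite H" unfolding H_def using finite_Basis by simp
  have Hh: "\<forall>h\<in>H. hom h" unfolding H_def hom_def using f by force
  have "Basis \<subseteq> span H"
  proof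
    fix b assume "b \<in> Basis"
    then have "f0 b \<in> span H" "f1 b \<in> span H" unfolding H_def by (auto intro: span_base)
    then show "b \<in> span H" using f(3)[of b] span_add by metis
  qed
  then have spanH: "span H = UNIV" using span_Basis span_mono[of Basis "span H"] span_span by auto
  obtain S where S: "Inv J K S" "\<forall>b\<in>H. \<exists>l. \<forall>v\<in>S. br b v - l *s v \<in> J"
    using iter[OF Hf Hh assms] by blast
  have S': "subspace S" "J \<subseteq> S" "S \<subseteq> W J K" "\<not> S \<subseteq> J" "graded S"
    using S(1) unfolding Inv_def by blast+
  obtain v where v: "v \<in> S" "v \<notin> J" using S'(4) by blast
  have "f0 v \<in> S" "f1 v \<in> S" using S'(5) v(1) f unfolding graded_def by blast+
  moreover have "f0 v \<notin> J \<or> f1 v \<notin> J" using v(2) f(3)[of v] J(1) subspace_add by metis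
  ultimately obtain w e where w: "w \<in> S" "w \<notin> J" "e < 2" "w \<in> G e" using f by (metis one_less_numeral_iff pos2 semiring_norm(76))
  define L where "L = span (insert w J)"
  have spJ: "span J = J" using J(1) by simp
  have wL: "w \<in> L" unfolding L_def by (rule span_base) simp
  have JL: "J \<subseteq> L" unfolding L_def using span_mono[of J "insert w J"] spJ by auto
  have Lsub: "subspace L" unfolding L_def by simp
  have Lform: "y \<in> L \<longleftrightarrow> (\<exists>k j. j \<in> J \<and> y = k *s w + j)" for y
  proof
    assume "y \<in> L"
    then obtain k where "y - k *s w \<in> J" unfolding L_def span_insert spJ by blast
    then show "\<exists>k j. j \<in> J \<and> y = k *s w + j" by (intro exI[of _ k] exI[of _ "y - k *s w"]) simp
  next
    assume "\<exists>k j. j \<in> J \<and> y = k *s w + j"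
    then show "y \<in> L" using wL JL Lsub subspace_add subspace_scale by blast
  qed
  have brw: "br x w \<in> L" for x
  proof -
    have "x \<in> span H" using spanH by simp
    then show ?thesis
    proof (induction rule: span_induct_alt)
      case base then show ?case using Lsub subspace_0 by simp
    next
      case (step c h y)
      obtain l where l: "\<forall>v\<in>S. br h v - l *s v \<in> J" using S(2) step(1) by blast
      have "br h w = l *s w + (br h w - l *s w)" by simp
      then have "br h w \<in> L" using l w(1) Lform by metis
      then show ?case using step(2) Lsub by (simp add: br_add_l br_scale_l subspace_add subspace_scale)
    qed
  qed
  have wbr: "br w x \<in> L" for x
  proof -
    have "br w (f0 x) = - ((-1) ^ (e * 0)) *s br (f0 x) w" using br_anti[OF w(3) _ w(4) f(1)] by simp
    moreover have "br w (f1 x) = - ((-1) ^ (e * 1)) *s br (f1 x) w" using br_anti[OF w(3) _ w(4) f(2)] by simp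
    ultimately have "br w (f0 x) \<in> L" "br w (f1 x) \<in> L" using brw Lsub
      by (simp_all add: subspace_neg subspace_scale)
    then show ?thesis using f(3)[of x] br_add_r Lsub subspace_add by metis
  qed
  have gL: "gi L" unfolding gi_iff
  proof (intro conjI allI impI)
    show "subspace L" by (rule Lsub)
    fix x y assume "y \<in> L"
    then obtain k j where kj: "j \<in> J" "y = k *s w + j" using Lform by blast
    show "br x y \<in> L" using brw[of x] J(3)[OF kj(1), of x] JL Lsub kj(2)
      by (simp add: br_add_r br_scale_r subspace_add subspace_scale subset_iff)
    show "br y x \<in> L" using wbr[of x] J(3)[OF kj(1), of x] JL Lsub kj(2)
      by (simp add: br_add_l br_scale_l subspace_add subspace_scale subset_iff)
  next
    show "graded L" unfolding graded_def
    proof (intro ballI impI)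
      fix y y0 y1 assume y: "y \<in> L" "y0 \<in> G 0" "y1 \<in> G 1" "y = y0 + y1"
      then obtain k j where kj: "j \<in> J" "y = k *s w + j" using Lform by blast
      have j: "f0 j \<in> J" "f1 j \<in> J" using J(2) kj(1) f unfolding graded_def by blast+
      have "e = 0 \<or> e = 1" using w(3) by auto
      then show "y0 \<in> L \<and> y1 \<in> L"
      proof
        assume e0: "e = 0"
        have "(k *s w + f0 j) + f1 j = y0 + y1" using kj(2) y(4) f(3)[of j] by (simp add: add.assoc)
        moreover have "k *s w + f0 j \<in> G 0" using w(4) e0 f(1) G0sub subspace_add subspace_scale by metis
        ultimately have "y0 = k *s w + f0 j" "y1 = f1 j" using uniq y(2,3) f(2) by metis+
        then show ?thesis using Lform j JL by blast
      next
        assume e1: "e = 1"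
        have "f0 j + (k *s w + f1 j) = y0 + y1" using kj(2) y(4) f(3)[of j] by (simp add: ac_simps)
        moreover have "k *s w + f1 j \<in> G 1" using w(4) e1 f(2) G1sub subspace_add subspace_scale by metis
        ultimately have "y0 = f0 j" "y1 = k *s w + f1 j" using uniq y(2,3) f(1) by metis+
        then show ?thesis using Lform j JL by blast
      qed
    qed
  qed
  have "J \<subset> L" using JL wL w(2) by blast
  moreover have "L \<subseteq> K" unfolding L_def
    using span_minimal[of "insert w J" K] K(1) w(1) S'(3) W_props(3)[OF assms(1,2)] assms(3) by blast
  moreover have "w \<notin> span J" unfolding spJ by (rule w(2))
  then have "dim L = dim J + 1" unfolding L_def dim_span dim_insert by simp
  ultimately show ?thesis using gL by blast
qed


lemma gi_zero: "gi {0}"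
proof -
  have "subspace {0}" by (simp add: subspace_def)
  moreover have "graded {0}" unfolding graded_def
  proof (intro ballI impI)
    fix v v0 v1 assume h: "v \<in> {0}" "v0 \<in> G 0" "v1 \<in> G 1" "v = v0 + v1"
    then have "v0 + v1 = 0 + 0" by simp
    moreover have "(0::'v) \<in> G 0" "(0::'v) \<in> G 1" using G0sub G1sub subspace_0 by blast+
    ultimately show "v0 \<in> {0} \<and> v1 \<in> {0}" using uniq h(2,3) by blast
  qed
  moreover have "\<forall>x y. y \<in> {0} \<longrightarrow> br x y \<in> {0} \<and> br y x \<in> {0}" by simp
  ultimately show ?thesis unfolding gi_iff by blast
qed

lemma gi_UNIV: "gi UNIV" unfolding gi_iff graded_def by simp

primrec ch :: "nat \<Rightarrow> 'v set" where
  "ch 0 = {0}"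
| "ch (Suc k) = (if ch k \<subset> UNIV then (SOME L. gi L \<and> ch k \<subset> L \<and> dim L = dim (ch k) + 1) else ch k)"

lemma ch_props: "k \<le> dim (UNIV :: 'v set) \<Longrightarrow> gi (ch k) \<and> dim (ch k) = k"
proof (induction k)
  case 0 then show ?case using gi_zero by simp
next
  case (Suc k)
  then have h: "gi (ch k)" "dim (ch k) = k" by auto
  have "ch k \<noteq> UNIV" using h Suc.prems by auto
  then have ne: "ch k \<subset> UNIV" by blast
  then have "\<exists>L. gi L \<and> ch k \<subset> L \<and> dim L = dim (ch k) + 1" using core[OF h(1) gi_UNIV] by blast
  from someI_ex[OF this] show ?case using ne h by simp
qed

lemma ch_mono: "k < dim (UNIV :: 'v set) \<Longrightarrow> ch k \<subseteq> ch (Suc k)"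
proof -
  assume k: "k < dim (UNIV :: 'v set)"
  then have h: "gi (ch k)" "dim (ch k) = k" using ch_props by auto
  have "ch k \<noteq> UNIV" using h k by auto
  then have ne: "ch k \<subset> UNIV" by blast
  then have "\<exists>L. gi L \<and> ch k \<subset> L \<and> dim L = dim (ch k) + 1" using core[OF h(1) gi_UNIV] by blast
  from someI_ex[OF this] show ?thesis using ne by auto
qed

lemma final:
  shows "(\<forall>I. minimal_graded_ideal scale G br I \<longrightarrow> dim I = 1) \<and>
         (\<exists>C :: nat \<Rightarrow> 'v set. C 0 = UNIV \<and> C (dim (UNIV :: 'v set)) = {0} \<and>
            (\<forall>i<dim (UNIV :: 'v set). C (Suc i) \<subseteq> C i) \<and>
            (\<forall>i\<le>dim (UNIV :: 'v set). gi (C i) \<and> dim (C i) = dim (UNIV :: 'v set) - i))"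
proof (intro conjI allI impI)
  fix I assume "minimal_graded_ideal scale G br I"
  then have I: "gi I" "I \<noteq> {0}" "\<And>J. gi J \<Longrightarrow> J \<subseteq> I \<Longrightarrow> J = {0} \<or> J = I"
    unfolding minimal_graded_ideal_def by blast+
  have "0 \<in> I" using gi_D(1)[OF I(1)] subspace_0 by blast
  then have "{0} \<subset> I" using I(2) by blast
  then obtain L where L: "gi L" "{0} \<subset> L" "L \<subseteq> I" "dim L = dim {0::'v} + 1" using core[OF gi_zero I(1)] by blast
  have "L = I" using I(3)[OF L(1,3)] L(2) by blast
  then show "dim I = 1" using L(4) by simp
next
  define N where "N = dim (UNIV :: 'v set)"
  have top: "ch N = UNIV"
  proof -
    have "gi (ch N)" "dim (ch N) = N" using ch_props N_def by auto
    then have "span (ch N) = UNIV" using dim_eq_full dimension_def N_def by simp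
    moreover have "span (ch N) = ch N" using gi_D(1)[OF \<open>gi (ch N)\<close>] by (simp only: span_eq_iff)
    ultimately show ?thesis by simp
  qed
  show "\<exists>C :: nat \<Rightarrow> 'v set. C 0 = UNIV \<and> C (dim (UNIV :: 'v set)) = {0} \<and>
            (\<forall>i<dim (UNIV :: 'v set). C (Suc i) \<subseteq> C i) \<and>
            (\<forall>i\<le>dim (UNIV :: 'v set). gi (C i) \<and> dim (C i) = dim (UNIV :: 'v set) - i)"
    unfolding N_def[symmetric]
  proof (intro exI[of _ "\<lambda>i. ch (N - i)"] conjI allI impI)
    show "ch (N - 0) = UNIV" using top by simp
    show "ch (N - N) = {0}" by simp
    fix i
    show "i < N \<Longrightarrow> ch (N - Suc i) \<subseteq> ch (N - i)"
      using ch_mono[of "N - Suc i"] N_def by (simp add: Suc_diff_Suc)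
    show "i \<le> N \<Longrightarrow> gi (ch (N - i))" using ch_props[of "N - i"] N_def by simp
    show "i \<le> N \<Longrightarrow> dim (ch (N - i)) = N - i" using ch_props[of "N - i"] N_def by simp
  qed
qed

end

theorem lemma5p1:
  fixes scale :: "'k::field \<Rightarrow> 'v::ab_group_add \<Rightarrow> 'v"
    and G :: "nat \<Rightarrow> 'v set"
    and br :: "'v \<Rightarrow> 'v \<Rightarrow> 'v"
    and N :: nat
  assumes "alg_closed_field TYPE('k)"
    and "prime CHAR('k)" and "CHAR('k) > 2"
    and "lie_superalgebra scale G br"
    and "fin_dim scale"
    and "completely_solvable scale br"
    and "N = vector_space.dim scale (UNIV :: 'v set)"
  shows "(\<forall>I. minimal_graded_ideal scale G br I \<longrightarrow> vector_space.dim scale I = 1) \<and>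
         (\<exists>C :: nat \<Rightarrow> 'v set. C 0 = UNIV \<and> C N = {0} \<and>
            (\<forall>i<N. C (Suc i) \<subseteq> C i) \<and>
            (\<forall>i\<le>N. graded_ideal scale G br (C i) \<and> vector_space.dim scale (C i) = N - i))"
proof -
  have vs: "vector_space scale" using assms(4) unfolding lie_superalgebra_def by blast
  interpret vector_space scale by (rule vs)
  obtain B0 where B0: "finite B0" "span B0 = UNIV" using assms(5) unfolding fin_dim_def by blast
  obtain B where B: "independent B" "UNIV \<subseteq> span B" using basis_exists[of UNIV] by blast
  have fB: "finite B" using independent_span_bound[OF B0(1) B(1)] B0(2) by simp
  have two: "(2::'k) \<noteq> 0"
  proof
    assume "(2::'k) = 0"
    then have "(of_nat 2::'k) = 0" by simp
    then have "CHAR('k) dvd 2" by (simp only: of_nat_eq_0_iff_char_dvd)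
    then show False using assms(3) by (auto dest: dvd_imp_le)
  qed
  interpret L: lsa scale B G br
    by (unfold_locales) (use fB B two assms in auto)
  show ?thesis using L.final assms(7) by simp
qed

end
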